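(* Let $n\ge p$, $\Psi\in\mathbb R^{n\times p}$ with $\|\Psi\|_2<1$, and set $\epsilon_0=\tfrac12(1-\|\Psi\|_2)$. There is a constant $K_{n,p,\epsilon_0}>0$ depending only on $n,p,\epsilon_0$ such that for every $p\times p$ diagonal matrix $D$ with positive diagonal entries, every $M\in\mathcal V_{n,p}$ and every $V\in\mathcal V_{p,p}$, $$\frac{\mathrm{etr}(VDM^T\Psi)}{{}_0F_1\!\left(\tfrac n2,\tfrac{D^2}{4}\right)}<\frac{\mathrm{etr}(-\epsilon_0 D)}{K_{n,p,\epsilon_0}}.$$
   Context: $\mathcal V_{n,p}=\{X\in\mathbb R^{n\times p}:X^TX=I_p\}$ (so $\mathcal V_{p,p}=O(p)$), with normalized Haar probability measure $[dX]$. $\|\cdot\|_2$ is the spectral norm, $\mathrm{etr}(A)=\exp(\mathrm{tr}A)$. For diagonal $D$ with diagonal $\boldsymbol d$, ${}_0F_1\!\left(\tfrac n2,\tfrac{D^2}{4}\right)=\int_{\mathcal V_{n,p}}\exp\big(\sum_j d_jX_{jj}\big)[dX]$. *)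

theory Defs
  imports "HOL-Probability.Probability"
begin

text \<open>Real matrices are represented as functions nat => nat => real; an m x k matrix
  is only ever read at indices i < m, j < k (dimensions are carried explicitly).\<close>

type_synonym rmat = "nat \<Rightarrow> nat \<Rightarrow> real"

definition mmult :: "nat \<Rightarrow> rmat \<Rightarrow> rmat \<Rightarrow> rmat" where
  "mmult k A B = (\<lambda>i j. \<Sum>l<k. A i l * B l j)"

definition mtrans :: "rmat \<Rightarrow> rmat" where
  "mtrans A = (\<lambda>i j. A j i)"

definition mtrace :: "nat \<Rightarrow> rmat \<Rightarrow> real" where
  "mtrace p A = (\<Sum>i<p. A i i)"

definition etr :: "nat \<Rightarrow> rmat \<Rightarrow> real" where
  "etr p A = exp (mtrace p A)"

definition diagm :: "(nat \<Rightarrow> real) \<Rightarrow> rmat" where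
  "diagm d = (\<lambda>i j. if i = j then d i else 0)"

text \<open>Stiefel manifold V_{n,p}: n x p matrices X with X^T X = I_p
  (entries outside the n x p block are normalised to 0). V_{p,p} = O(p).\<close>
definition stiefel :: "nat \<Rightarrow> nat \<Rightarrow> rmat set" where
  "stiefel n p = {X. (\<forall>i j. (n \<le> i \<or> p \<le> j) \<longrightarrow> X i j = 0) \<and>
     (\<forall>i<p. \<forall>j<p. mmult n (mtrans X) X i j = (if i = j then 1 else 0))}"

definition spec_norm :: "nat \<Rightarrow> nat \<Rightarrow> rmat \<Rightarrow> real" where
  "spec_norm n p A = Sup {sqrt (\<Sum>i<n. (\<Sum>j<p. A i j * x j)\<^sup>2) | x. (\<Sum>j<p. (x j)\<^sup>2) = 1}"

text \<open>Normalised Haar (uniform) probability measure on V_{n,p}: a probability measure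
  on the Borel sets of V_{n,p} which is invariant under left multiplication by O(n).
  (Such a measure exists and is unique.)\<close>
definition is_stiefel_haar :: "nat \<Rightarrow> nat \<Rightarrow> rmat measure \<Rightarrow> bool" where
  "is_stiefel_haar n p \<mu> \<longleftrightarrow>
     sets \<mu> = sets (restrict_space borel (stiefel n p)) \<and>
     prob_space \<mu> \<and>
     (\<forall>Q \<in> stiefel n n. \<forall>A \<in> sets \<mu>.
        emeasure \<mu> ((\<lambda>X. mmult n Q X) -` A \<inter> space \<mu>) = emeasure \<mu> A)"

text \<open>0F1(n/2, D^2/4) = integral over V_{n,p} of exp(sum_j d_j X_jj) [dX],
  for D = diag(d_0,...,d_{p-1}).\<close>
definition hyp0F1 :: "nat \<Rightarrow> rmat measure \<Rightarrow> (nat \<Rightarrow> real) \<Rightarrow> real" where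
  "hyp0F1 p \<mu> d = (\<integral>X. exp (\<Sum>j<p. d j * X j j) \<partial>\<mu>)"

end

theory Submission
  imports Defs
begin


lemma stiefel_col:
  assumes "X \<in> stiefel n p" "j < p"
  shows "(\<Sum>l<n. (X l j)\<^sup>2) = 1"
  using assms unfolding stiefel_def mmult_def mtrans_def by (auto simp: power2_eq_square)

lemma stiefel_zero:
  assumes "X \<in> stiefel n p" "n \<le> i \<or> p \<le> j"
  shows "X i j = 0"
  using assms unfolding stiefel_def by auto

lemma stiefel_entry_bound:
  assumes "X \<in> stiefel n p"
  shows "\<bar>X l j\<bar> \<le> 1"
proof (cases "l < n \<and> j < p")
  case True
  have "(X l j)\<^sup>2 \<le> (\<Sum>l<n. (X l j)\<^sup>2)"
    by (rule member_le_sum) (use True in auto)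
  then have "(X l j)\<^sup>2 \<le> 1" using stiefel_col[OF assms] True by simp
  then show ?thesis by (simp add: abs_square_le_1)
next
  case False
  then show ?thesis using stiefel_zero[OF assms, of l j] by auto
qed

lemma spec_bound:
  assumes "(\<Sum>j<p. (x j)\<^sup>2) = 1"
  shows "sqrt (\<Sum>i<n. (\<Sum>j<p. A i j * x j)\<^sup>2) \<le> spec_norm n p A"
  unfolding spec_norm_def
proof (rule cSup_upper)
  show "sqrt (\<Sum>i<n. (\<Sum>j<p. A i j * x j)\<^sup>2) \<in> {sqrt (\<Sum>i<n. (\<Sum>j<p. A i j * x j)\<^sup>2) |x. (\<Sum>j<p. (x j)\<^sup>2) = 1}"
    using assms by blast
  show "bdd_above {sqrt (\<Sum>i<n. (\<Sum>j<p. A i j * x j)\<^sup>2) |x. (\<Sum>j<p. (x j)\<^sup>2) = 1}"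
  proof (rule bdd_aboveI, safe)
    fix y :: "nat \<Rightarrow> real" assume y: "(\<Sum>j<p. (y j)\<^sup>2) = 1"
    have "(\<Sum>i<n. (\<Sum>j<p. A i j * y j)\<^sup>2) \<le> (\<Sum>i<n. (\<Sum>j<p. (A i j)\<^sup>2))"
    proof (rule sum_mono)
      fix i
      show "(\<Sum>j<p. A i j * y j)\<^sup>2 \<le> (\<Sum>j<p. (A i j)\<^sup>2)"
        using Cauchy_Schwarz_ineq_sum[of "A i" "y" "{..<p}"] y by simp
    qed
    then show "sqrt (\<Sum>i<n. (\<Sum>j<p. A i j * y j)\<^sup>2) \<le> sqrt (\<Sum>i<n. (\<Sum>j<p. (A i j)\<^sup>2))"
      by simp
  qed
qed

lemma trace_expand:
  shows "mtrace p (mmult n (mmult p (mmult p V (diagm d)) (mtrans M)) \<Psi>)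
    = (\<Sum>l<p. d l * (\<Sum>m<n. M m l * (\<Sum>i<p. \<Psi> m i * V i l)))"
proof -
  have 1: "mmult p V (diagm d) = (\<lambda>i l. if l < p then V i l * d l else 0)"
    by (auto simp: mmult_def diagm_def fun_eq_iff if_distrib cong: if_cong)
  have "mtrace p (mmult n (mmult p (mmult p V (diagm d)) (mtrans M)) \<Psi>)
     = (\<Sum>i<p. \<Sum>m<n. \<Sum>l<p. V i l * d l * M m l * \<Psi> m i)"
    unfolding 1 unfolding mtrace_def mmult_def mtrans_def
    by (simp add: sum_distrib_right)
  also have "\<dots> = (\<Sum>i<p. \<Sum>l<p. \<Sum>m<n. V i l * d l * M m l * \<Psi> m i)"
    by (rule sum.cong[OF refl], rule sum.swap)
  also have "\<dots> = (\<Sum>l<p. \<Sum>i<p. \<Sum>m<n. V i l * d l * M m l * \<Psi> m i)"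
    by (rule sum.swap)
  also have "\<dots> = (\<Sum>l<p. \<Sum>m<n. \<Sum>i<p. V i l * d l * M m l * \<Psi> m i)"
    by (rule sum.cong[OF refl], rule sum.swap)
  also have "\<dots> = (\<Sum>l<p. d l * (\<Sum>m<n. M m l * (\<Sum>i<p. \<Psi> m i * V i l)))"
    by (simp add: sum_distrib_left mult_ac)
  finally show ?thesis .
qed

lemma trace_term_bound:
  assumes M: "M \<in> stiefel n p" and V: "V \<in> stiefel p p" and l: "l < p"
  shows "\<bar>\<Sum>m<n. M m l * (\<Sum>i<p. \<Psi> m i * V i l)\<bar> \<le> spec_norm n p \<Psi>"
proof -
  let ?w = "\<lambda>m. \<Sum>i<p. \<Psi> m i * V i l"
  have "(\<Sum>m<n. M m l * ?w m)\<^sup>2 \<le> (\<Sum>m<n. (M m l)\<^sup>2) * (\<Sum>m<n. (?w m)\<^sup>2)"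
    by (rule Cauchy_Schwarz_ineq_sum)
  also have "\<dots> = (\<Sum>m<n. (?w m)\<^sup>2)" using stiefel_col[OF M l] by simp
  finally have "\<bar>\<Sum>m<n. M m l * ?w m\<bar> \<le> sqrt (\<Sum>m<n. (?w m)\<^sup>2)"
    by (intro real_le_rsqrt) (simp add: power2_abs)
  also have "\<dots> \<le> spec_norm n p \<Psi>"
    by (rule spec_bound) (use stiefel_col[OF V l] in simp)
  finally show ?thesis .
qed



definition idm :: "nat \<Rightarrow> rmat" where
  "idm n = (\<lambda>i j. if i = j \<and> i < n then 1 else 0)"

definition house :: "nat \<Rightarrow> (nat \<Rightarrow> real) \<Rightarrow> rmat" where
  "house n v = (\<lambda>i k. idm n i k - 2 * v i * v k / (\<Sum>l<n. (v l)\<^sup>2))"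

lemma sum_idm_left: "i < n \<Longrightarrow> (\<Sum>k<n. idm n i k * f k) = f i"
proof -
  assume i: "i < n"
  have "(\<Sum>k<n. idm n i k * f k) = (\<Sum>k<n. if i = k then f k else 0)"
    by (rule sum.cong) (auto simp: idm_def)
  also have "\<dots> = f i" using i by simp
  finally show ?thesis .
qed

lemma sum_idm_right: "i < n \<Longrightarrow> (\<Sum>k<n. f k * idm n k i) = f i"
proof -
  assume i: "i < n"
  have "(\<Sum>k<n. f k * idm n k i) = (\<Sum>k<n. if i = k then f k else 0)"
    by (rule sum.cong) (auto simp: idm_def)
  also have "\<dots> = f i" using i by simp
  finally show ?thesis .
qed

lemma idm_sym: "idm n i j = idm n j i"
  unfolding idm_def by auto

lemma idm_orth: "idm n \<in> stiefel n n"
proof -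
  have "(\<Sum>l<n. idm n l i * idm n l j) = (if i = j then 1 else 0)" if "i < n" "j < n" for i j
    using sum_idm_right[OF that(1), of "\<lambda>l. idm n l j"] that by (simp add: idm_def mult.commute)
  then show ?thesis unfolding stiefel_def mmult_def mtrans_def by (auto simp: idm_def)
qed

lemma mmult_assoc: "mmult n (mmult n A B) C = mmult n A (mmult n B C)"
proof -
  have "(\<Sum>l<n. (\<Sum>m<n. A i m * B m l) * C l j) = (\<Sum>m<n. A i m * (\<Sum>l<n. B m l * C l j))" for i j
  proof -
    have "(\<Sum>l<n. (\<Sum>m<n. A i m * B m l) * C l j) = (\<Sum>l<n. \<Sum>m<n. A i m * B m l * C l j)"
      by (simp add: sum_distrib_right)
    also have "\<dots> = (\<Sum>m<n. \<Sum>l<n. A i m * B m l * C l j)" by (rule sum.swap)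
    also have "\<dots> = (\<Sum>m<n. A i m * (\<Sum>l<n. B m l * C l j))"
      by (simp add: sum_distrib_left mult_ac)
    finally show ?thesis .
  qed
  then show ?thesis unfolding mmult_def by (simp add: fun_eq_iff)
qed

lemma orth_mult:
  assumes Q: "Q \<in> stiefel n n" and X: "X \<in> stiefel n p"
  shows "mmult n Q X \<in> stiefel n p"
proof -
  have z1: "\<And>i j. n \<le> i \<or> n \<le> j \<Longrightarrow> Q i j = 0" and
       o1: "\<And>i j. i < n \<Longrightarrow> j < n \<Longrightarrow> (\<Sum>l<n. Q l i * Q l j) = (if i = j then 1 else 0)"
    using Q unfolding stiefel_def mmult_def mtrans_def by auto
  have z2: "\<And>i j. n \<le> i \<or> p \<le> j \<Longrightarrow> X i j = 0" and
       o2: "\<And>i j. i < p \<Longrightarrow> j < p \<Longrightarrow> (\<Sum>l<n. X l i * X l j) = (if i = j then 1 else 0)"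
    using X unfolding stiefel_def mmult_def mtrans_def by auto
  have zero: "mmult n Q X i j = 0" if "n \<le> i \<or> p \<le> j" for i j
    using that z1 z2 unfolding mmult_def by auto
  have "(\<Sum>i<n. (\<Sum>l<n. Q i l * X l a) * (\<Sum>m<n. Q i m * X m b)) = (\<Sum>l<n. X l a * X l b)" for a b
  proof -
    have "(\<Sum>i<n. (\<Sum>l<n. Q i l * X l a) * (\<Sum>m<n. Q i m * X m b))
        = (\<Sum>i<n. \<Sum>l<n. \<Sum>m<n. Q i l * X l a * (Q i m * X m b))"
      by (simp add: sum_product)
    also have "\<dots> = (\<Sum>l<n. \<Sum>i<n. \<Sum>m<n. Q i l * X l a * (Q i m * X m b))" by (rule sum.swap)
    also have "\<dots> = (\<Sum>l<n. \<Sum>m<n. \<Sum>i<n. Q i l * X l a * (Q i m * X m b))"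
      by (rule sum.cong[OF refl], rule sum.swap)
    also have "\<dots> = (\<Sum>l<n. \<Sum>m<n. X l a * X m b * (\<Sum>i<n. Q i l * Q i m))"
      by (simp add: sum_distrib_left mult_ac)
    also have "\<dots> = (\<Sum>l<n. \<Sum>m<n. X l a * X m b * (if l = m then 1 else 0))"
      by (intro sum.cong refl) (simp add: o1)
    also have "\<dots> = (\<Sum>l<n. X l a * X l b)"
      by (simp add: if_distrib cong: if_cong)
    finally show ?thesis .
  qed
  then have "mmult n (mtrans (mmult n Q X)) (mmult n Q X) i j = (if i = j then 1 else 0)"
    if "i < p" "j < p" for i j
    using o2[OF that] unfolding mmult_def mtrans_def by simp
  with zero show ?thesis unfolding stiefel_def by auto
qed

lemma house_orth:
  assumes vz: "\<And>k. n \<le> k \<Longrightarrow> v k = 0" and pos: "(\<Sum>l<n. (v l)\<^sup>2) > 0"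
  shows "house n v \<in> stiefel n n"
proof -
  define vv where "vv = (\<Sum>l<n. (v l)\<^sup>2)"
  have H: "house n v = (\<lambda>i k. idm n i k - 2 * v i * v k / vv)"
    unfolding house_def vv_def ..
  have zero: "house n v i j = 0" if "n \<le> i \<or> n \<le> j" for i j
    using that vz unfolding H idm_def by auto
  have "(\<Sum>l<n. house n v l i * house n v l j) = (if i = j then 1 else 0)"
    if ij: "i < n" "j < n" for i j
  proof -
    have "(\<Sum>l<n. house n v l i * house n v l j)
      = (\<Sum>l<n. idm n l i * idm n l j) - (\<Sum>l<n. idm n l i * (2 * v l * v j / vv))
        - (\<Sum>l<n. (2 * v l * v i / vv) * idm n l j) + (\<Sum>l<n. (2 * v l * v i / vv) * (2 * v l * v j / vv))"
      unfolding H by (simp add: algebra_simps sum_subtractf sum.distrib)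
    also have "(\<Sum>l<n. idm n l i * idm n l j) = (if i = j then 1 else 0)"
      using sum_idm_right[OF ij(1), of "\<lambda>l. idm n l j"] ij by (simp add: idm_def mult.commute)
    also have "(\<Sum>l<n. idm n l i * (2 * v l * v j / vv)) = 2 * v i * v j / vv"
      using sum_idm_right[OF ij(1), of "\<lambda>l. 2 * v l * v j / vv"] by (simp add: mult_ac)
    also have "(\<Sum>l<n. (2 * v l * v i / vv) * idm n l j) = 2 * v i * v j / vv"
      using sum_idm_right[OF ij(2), of "\<lambda>l. 2 * v l * v i / vv"] by (simp add: mult_ac)
    also have "(\<Sum>l<n. (2 * v l * v i / vv) * (2 * v l * v j / vv)) = 4 * v i * v j * vv / (vv * vv)"
      unfolding vv_def by (simp add: sum_distrib_left sum_divide_distrib power2_eq_square mult_ac)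
    also have "4 * v i * v j * vv / (vv * vv) = 4 * v i * v j / vv"
      using pos unfolding vv_def[symmetric] by (simp add: field_simps)
    finally show ?thesis by (simp add: field_simps)
  qed
  with zero show ?thesis unfolding stiefel_def mmult_def mtrans_def by auto
qed

lemma house_apply:
  assumes "i < n"
  shows "mmult n (house n v) Y i j = Y i j - 2 * v i * (\<Sum>k<n. v k * Y k j) / (\<Sum>k<n. (v k)\<^sup>2)"
proof -
  have "mmult n (house n v) Y i j = (\<Sum>k<n. idm n i k * Y k j) - (\<Sum>k<n. 2 * v i * v k / (\<Sum>l<n. (v l)\<^sup>2) * Y k j)"
    unfolding mmult_def house_def by (simp add: algebra_simps sum_subtractf)
  also have "(\<Sum>k<n. idm n i k * Y k j) = Y i j" by (rule sum_idm_left[OF assms])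
  also have "(\<Sum>k<n. 2 * v i * v k / (\<Sum>l<n. (v l)\<^sup>2) * Y k j) = 2 * v i * (\<Sum>k<n. v k * Y k j) / (\<Sum>k<n. (v k)\<^sup>2)"
    by (simp add: sum_distrib_left sum_divide_distrib mult_ac)
  finally show ?thesis .
qed

lemma stiefel_orth_entries:
  assumes "X \<in> stiefel n p" "i < p" "j < p"
  shows "(\<Sum>l<n. X l i * X l j) = (if i = j then 1 else 0)"
  using assms unfolding stiefel_def mmult_def mtrans_def by auto

lemma trans_aux:
  assumes X: "X \<in> stiefel n p" and pn: "p \<le> n"
  shows "q \<le> p \<Longrightarrow> \<exists>Q\<in>stiefel n n. \<forall>i<n. \<forall>j<q. mmult n Q X i j = (if i = j then 1 else 0)"
proof (induction q)
  case 0
  show ?case using idm_orth by blast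
next
  case (Suc q)
  then obtain Q where Q: "Q \<in> stiefel n n" and QX: "\<forall>i<n. \<forall>j<q. mmult n Q X i j = (if i = j then 1 else 0)"
    by auto
  define Y where "Y = mmult n Q X"
  have Y: "Y \<in> stiefel n p" unfolding Y_def by (rule orth_mult[OF Q X])
  have qp: "q < p" and qn: "q < n" using Suc.prems pn by auto
  have Yd: "\<And>i j. i < n \<Longrightarrow> j < q \<Longrightarrow> Y i j = (if i = j then 1 else 0)" using QX unfolding Y_def by auto
  have Yzq: "Y j q = 0" if j: "j < q" for j
  proof -
    have jn: "j < n" using j qn by auto
    have "(\<Sum>l<n. Y l j * Y l q) = 0" using stiefel_orth_entries[OF Y, of j q] j qp by auto
    moreover have "(\<Sum>l<n. Y l j * Y l q) = (\<Sum>l<n. idm n j l * Y l q)"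
      by (rule sum.cong) (use Yd j in \<open>auto simp: idm_def\<close>)
    ultimately show ?thesis using sum_idm_left[OF jn, of "\<lambda>l. Y l q"] by simp
  qed
  have Yn: "(\<Sum>l<n. Y l q * Y l q) = 1" using stiefel_orth_entries[OF Y, of q q] qp by auto
  show ?case
  proof (cases "\<forall>k<n. Y k q = (if k = q then 1 else 0)")
    case True
    then show ?thesis using Q QX Y_def by (metis less_Suc_eq)
  next
    case False
    define v where "v = (\<lambda>k. if k < n then Y k q - (if k = q then 1 else 0) else 0)"
    have vz: "\<And>k. n \<le> k \<Longrightarrow> v k = 0" unfolding v_def by auto
    obtain k0 where k0: "k0 < n" "v k0 \<noteq> 0" using False unfolding v_def by auto
    have vvpos: "(\<Sum>l<n. (v l)\<^sup>2) > 0"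
    proof -
      have "(v k0)\<^sup>2 \<le> (\<Sum>l<n. (v l)\<^sup>2)" by (rule member_le_sum) (use k0 in auto)
      moreover have "(v k0)\<^sup>2 > 0" using k0 by simp
      ultimately show ?thesis by linarith
    qed
    have vv: "(\<Sum>l<n. (v l)\<^sup>2) = 2 - 2 * Y q q"
    proof -
      have "(\<Sum>l<n. (v l)\<^sup>2) = (\<Sum>l<n. Y l q * Y l q - 2 * (idm n q l * Y l q) + idm n q l * idm n q l)"
        by (rule sum.cong) (auto simp: v_def idm_def power2_eq_square algebra_simps)
      also have "\<dots> = (\<Sum>l<n. Y l q * Y l q) - 2 * (\<Sum>l<n. idm n q l * Y l q) + (\<Sum>l<n. idm n q l * idm n q l)"
        by (simp add: sum_subtractf sum.distrib sum_distrib_left)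
      finally show ?thesis using Yn sum_idm_left[OF qn, of "\<lambda>l. Y l q"] sum_idm_left[OF qn, of "\<lambda>l. idm n q l"] qn
        by (simp add: idm_def)
    qed
    have vy: "(\<Sum>k<n. v k * Y k q) = 1 - Y q q"
    proof -
      have "(\<Sum>k<n. v k * Y k q) = (\<Sum>l<n. Y l q * Y l q - idm n q l * Y l q)"
        by (rule sum.cong) (auto simp: v_def idm_def algebra_simps)
      also have "\<dots> = (\<Sum>l<n. Y l q * Y l q) - (\<Sum>l<n. idm n q l * Y l q)"
        by (simp add: sum_subtractf)
      finally have "(\<Sum>k<n. v k * Y k q) = (\<Sum>l<n. Y l q * Y l q) - (\<Sum>l<n. idm n q l * Y l q)" .
      then show ?thesis using Yn sum_idm_left[OF qn, of "\<lambda>l. Y l q"] by simp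
    qed
    have vyj: "(\<Sum>k<n. v k * Y k j) = 0" if j: "j < q" for j
    proof -
      have jn: "j < n" using j qn by auto
      have "(\<Sum>k<n. v k * Y k j) = (\<Sum>k<n. idm n j k * v k)"
        by (rule sum.cong) (use Yd j in \<open>auto simp: idm_def\<close>)
      also have "\<dots> = v j" by (rule sum_idm_left[OF jn])
      also have "\<dots> = 0" using Yzq[OF j] j jn unfolding v_def by auto
      finally show ?thesis .
    qed
    define Q' where "Q' = mmult n (house n v) Q"
    have Q': "Q' \<in> stiefel n n" unfolding Q'_def by (rule orth_mult[OF house_orth[OF vz vvpos] Q])
    have "mmult n Q' X i j = (if i = j then 1 else 0)" if i: "i < n" and j: "j < Suc q" for i j
    proof -
      have "mmult n Q' X i j = mmult n (house n v) Y i j" unfolding Q'_def Y_def mmult_assoc ..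
      also have "\<dots> = Y i j - 2 * v i * (\<Sum>k<n. v k * Y k j) / (\<Sum>k<n. (v k)\<^sup>2)"
        by (rule house_apply[OF i])
      also have "\<dots> = (if i = j then 1 else 0)"
      proof (cases "j < q")
        case True
        then show ?thesis using vyj Yd i by simp
      next
        case False
        then have jq: "j = q" using j by auto
        have ne: "1 - Y q q \<noteq> 0" using vvpos vv by auto
        have "Y i j - 2 * v i * (\<Sum>k<n. v k * Y k j) / (\<Sum>k<n. (v k)\<^sup>2) = Y i q - v i"
          unfolding jq vy vv using ne by (simp add: field_simps)
        also have "\<dots> = (if i = j then 1 else 0)" using i jq unfolding v_def by auto
        finally show ?thesis .
      qed
      finally show ?thesis .
    qed
    then show ?thesis using Q' by blast
  qed
qed

lemma transitive:
  assumes X: "X \<in> stiefel n p" and pn: "p \<le> n"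
  shows "\<exists>Q\<in>stiefel n n. \<forall>j<p. mmult n Q X j j = 1"
proof -
  obtain Q where "Q \<in> stiefel n n" "\<forall>i<n. \<forall>j<p. mmult n Q X i j = (if i = j then 1 else 0)"
    using trans_aux[OF X pn, of p] by auto
  then show ?thesis using pn by (intro bexI[of _ Q]) auto
qed


lemma cont_lin: "continuous_on UNIV (\<lambda>X::rmat. \<Sum>l<n. Q j l * X l j)"
proof -
  have c: "continuous_on UNIV (\<lambda>X::rmat. X l j)" for l
    by (rule continuous_on_product_then_coordinatewise[OF continuous_on_product_coordinates])
  show ?thesis by (intro continuous_on_sum continuous_on_mult_left c)
qed

lemma open_A: "open {X::rmat. \<forall>j<p. c < (\<Sum>l<n. Q j l * X l j)}"
proof -
  have "{X::rmat. \<forall>j<p. c < (\<Sum>l<n. Q j l * X l j)} = (\<Inter>j\<in>{..<p}. {X. c < (\<Sum>l<n. Q j l * X l j)})"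
    by auto
  also have "open \<dots>"
    by (intro open_INT ballI finite_lessThan open_Collect_less continuous_on_const cont_lin)
  finally show ?thesis .
qed

definition toM :: "nat \<Rightarrow> rat list list \<Rightarrow> rmat" where
  "toM n xs = (\<lambda>i j. if i < n \<and> j < n then of_rat (xs ! i ! j) else 0)"

definition closem :: "nat \<Rightarrow> real \<Rightarrow> rmat \<Rightarrow> rmat \<Rightarrow> bool" where
  "closem n \<delta> Q R \<longleftrightarrow> (\<forall>i<n. \<forall>k<n. \<bar>Q i k - R i k\<bar> < \<delta>)"

lemma rat_approx:
  fixes x \<delta> :: real
  assumes "\<delta> > 0" shows "\<exists>r::rat. \<bar>x - of_rat r\<bar> < \<delta>"
proof -
  obtain q where "q \<in> \<rat>" "x - \<delta> < q" "q < x + \<delta>"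
    using Rats_dense_in_real[of "x - \<delta>" "x + \<delta>"] assms by auto
  then show ?thesis by (metis Rats_cases abs_diff_less_iff add.commute diff_less_eq less_diff_eq)
qed

lemma aux_ineq: "1 - (t::real) \<le> (1 - c) / 2 \<Longrightarrow> c < 1 \<Longrightarrow> c < t"
  by (simp add: field_simps)

lemma U_pos:
  assumes haar: "is_stiefel_haar n p \<mu>" and p1: "1 \<le> p" and pn: "p \<le> n" and c1: "c < 1"
  shows "measure \<mu> {X \<in> stiefel n p. \<forall>j<p. c < X j j} > 0"
proof -
  let ?S = "stiefel n p"
  define U where "U = {X \<in> ?S. \<forall>j<p. c < X j j}"
  have sets: "sets \<mu> = sets (restrict_space borel ?S)" and ps: "prob_space \<mu>"
    and inv: "\<And>Q A. Q \<in> stiefel n n \<Longrightarrow> A \<in> sets \<mu> \<Longrightarrow>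
        emeasure \<mu> ((\<lambda>X. mmult n Q X) -` A \<inter> space \<mu>) = emeasure \<mu> A"
    using haar unfolding is_stiefel_haar_def by auto
  have space: "space \<mu> = ?S"
    using sets_eq_imp_space_eq[OF sets] by (simp add: space_restrict_space)
  define A where "A Q = {X \<in> ?S. \<forall>j<p. c < (\<Sum>l<n. Q j l * X l j)}" for Q
  have A_sets: "A Q \<in> sets \<mu>" for Q
  proof -
    have "A Q = ?S \<inter> {X::rmat. \<forall>j<p. c < (\<Sum>l<n. Q j l * X l j)}" unfolding A_def by auto
    moreover have "{X::rmat. \<forall>j<p. c < (\<Sum>l<n. Q j l * X l j)} \<in> sets borel"
      by (rule borel_open[OF open_A])
    ultimately show ?thesis unfolding sets sets_restrict_space by blast
  qed
  have U_A: "U = A (idm n)"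
  proof -
    have "(\<Sum>l<n. idm n j l * X l j) = X j j" if "X \<in> ?S" "j < p" for X j
    proof (cases "j < n")
      case True then show ?thesis by (rule sum_idm_left)
    next
      case False then show ?thesis using that pn by auto
    qed
    then show ?thesis unfolding U_def A_def by auto
  qed
  have U_sets: "U \<in> sets \<mu>" using A_sets U_A by simp
  have pre: "(\<lambda>X. mmult n Q X) -` U \<inter> space \<mu> = A Q" if Q: "Q \<in> stiefel n n" for Q
    unfolding space U_def A_def using orth_mult[OF Q] by (auto simp: mmult_def)
  have n0: "n > 0" using p1 pn by auto
  define \<delta> where "\<delta> = (1 - c) / (4 * n)"
  have dpos: "\<delta> > 0" unfolding \<delta>_def using c1 n0 by simp
  obtain f :: "real \<Rightarrow> rat" where f: "\<And>x. \<bar>x - of_rat (f x)\<bar> < \<delta>"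
    using rat_approx[OF dpos] by metis
  define I where "I = {xs. \<exists>Q\<in>stiefel n n. closem n \<delta> Q (toM n xs)}"
  define Qs where "Qs xs = (SOME Q. Q \<in> stiefel n n \<and> closem n \<delta> Q (toM n xs))" for xs
  have Qs: "Qs xs \<in> stiefel n n \<and> closem n \<delta> (Qs xs) (toM n xs)" if "xs \<in> I" for xs
    using that unfolding I_def Qs_def by (metis (mono_tags, lifting) mem_Collect_eq someI_ex)
  have cover: "?S \<subseteq> (\<Union>xs\<in>I. A (Qs xs))"
  proof
    fix X assume X: "X \<in> ?S"
    obtain Q0 where Q0: "Q0 \<in> stiefel n n" "\<forall>j<p. mmult n Q0 X j j = 1"
      using transitive[OF X pn] by auto
    define xs where "xs = map (\<lambda>i. map (\<lambda>k. f (Q0 i k)) [0..<n]) [0..<n]"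
    have tm: "toM n xs i k = of_rat (f (Q0 i k))" if "i < n" "k < n" for i k
      using that unfolding toM_def xs_def by simp
    have cl0: "closem n \<delta> Q0 (toM n xs)" unfolding closem_def using tm f by simp
    then have xsI: "xs \<in> I" unfolding I_def using Q0 by blast
    define Q1 where "Q1 = Qs xs"
    have Q1: "Q1 \<in> stiefel n n" "closem n \<delta> Q1 (toM n xs)" using Qs[OF xsI] Q1_def by auto
    have diff: "\<bar>Q1 i k - Q0 i k\<bar> < 2 * \<delta>" if "i < n" "k < n" for i k
      using Q1(2) cl0 that unfolding closem_def by fastforce
    have "c < (\<Sum>l<n. Q1 j l * X l j)" if j: "j < p" for j
    proof -
      have jn: "j < n" using j pn by auto
      have "\<bar>(\<Sum>l<n. Q1 j l * X l j) - (\<Sum>l<n. Q0 j l * X l j)\<bar> = \<bar>\<Sum>l<n. (Q1 j l - Q0 j l) * X l j\<bar>"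
        by (simp add: sum_subtractf algebra_simps)
      also have "\<dots> \<le> (\<Sum>l<n. \<bar>(Q1 j l - Q0 j l) * X l j\<bar>)" by (rule sum_abs)
      also have "\<dots> \<le> (\<Sum>l<n. 2 * \<delta>)"
      proof (rule sum_mono)
        fix l assume "l \<in> {..<n}"
        then have "\<bar>Q1 j l - Q0 j l\<bar> \<le> 2 * \<delta>" using diff[OF jn, of l] by auto
        moreover have "\<bar>X l j\<bar> \<le> 1" by (rule stiefel_entry_bound[OF X])
        ultimately show "\<bar>(Q1 j l - Q0 j l) * X l j\<bar> \<le> 2 * \<delta>"
          by (simp add: abs_mult) (metis abs_ge_zero mult_le_one mult.commute mult_mono' order_trans
              mult_right_mono  mult_cancel_left1 zero_le_mult_iff)
      qed
      also have "\<dots> = (1 - c) / 2" unfolding \<delta>_def using n0 by simp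
      finally have "\<bar>(\<Sum>l<n. Q1 j l * X l j) - 1\<bar> \<le> (1 - c) / 2"
        using Q0(2) j unfolding mmult_def by simp
      then have "1 - (\<Sum>l<n. Q1 j l * X l j) \<le> (1 - c) / 2" by (simp only: abs_le_iff) linarith
      then show ?thesis using c1 by (rule aux_ineq)
    qed
    then have "X \<in> A Q1" unfolding A_def using X by auto
    then show "X \<in> (\<Union>xs\<in>I. A (Qs xs))" using xsI Q1_def by blast
  qed
  have "emeasure \<mu> U \<noteq> 0"
  proof
    assume U0: "emeasure \<mu> U = 0"
    have "(\<Union>xs\<in>I. A (Qs xs)) \<in> null_sets \<mu>"
    proof (rule null_sets_UN')
      show "countable I" by (rule countable_subset[OF subset_UNIV]) simp
      fix xs assume "xs \<in> I"
      then have Q: "Qs xs \<in> stiefel n n" using Qs by auto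
      have "emeasure \<mu> (A (Qs xs)) = 0" using inv[OF Q U_sets] pre[OF Q] U0 by simp
      then show "A (Qs xs) \<in> null_sets \<mu>" using A_sets by auto
    qed
    moreover have "space \<mu> \<in> sets \<mu>" by simp
    ultimately have "space \<mu> \<in> null_sets \<mu>"
      using null_sets_subset[of _ \<mu> "space \<mu>"] cover unfolding space by blast
    then show False using prob_space.emeasure_space_1[OF ps] by auto
  qed
  note ne = this
  interpret P: prob_space \<mu> by (rule ps)
  have "measure \<mu> U \<noteq> 0"
    using ne P.emeasure_eq_measure by (metis ennreal_0)
  then show ?thesis unfolding U_def[symmetric] using measure_nonneg[of \<mu> U] by linarith
qed

lemma haar_basic:
  assumes haar: "is_stiefel_haar n p \<mu>"
  shows "space \<mu> = stiefel n p" "\<And>B. B \<in> sets borel \<Longrightarrow> stiefel n p \<inter> B \<in> sets \<mu>"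
    "prob_space \<mu>" "\<And>f::rmat\<Rightarrow>real. continuous_on UNIV f \<Longrightarrow> f \<in> borel_measurable \<mu>"
proof -
  have sets: "sets \<mu> = sets (restrict_space borel (stiefel n p))"
    using haar unfolding is_stiefel_haar_def by auto
  show "space \<mu> = stiefel n p"
    using sets_eq_imp_space_eq[OF sets] by (simp add: space_restrict_space)
  show "stiefel n p \<inter> B \<in> sets \<mu>" if "B \<in> sets borel" for B
    using that unfolding sets sets_restrict_space by blast
  show "prob_space \<mu>" using haar unfolding is_stiefel_haar_def by auto
  show "f \<in> borel_measurable \<mu>" if "continuous_on UNIV f" for f :: "rmat \<Rightarrow> real"
  proof -
    have "f \<in> borel_measurable (restrict_space borel (stiefel n p))"
      by (rule measurable_restrict_space1[OF borel_measurable_continuous_onI[OF that]])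
    note fr = this
    have eq: "borel_measurable \<mu> = borel_measurable (restrict_space borel (stiefel n p))"
      by (rule measurable_cong_sets[OF sets refl])
    show ?thesis unfolding eq by (rule fr)
  qed
qed

lemma cont_coord: "continuous_on UNIV (\<lambda>X::rmat. X l j)"
  by (rule continuous_on_product_then_coordinatewise[OF continuous_on_product_coordinates])

lemma den_lower:
  assumes haar: "is_stiefel_haar n p \<mu>" and dpos: "\<forall>j<p. 0 < d j"
  shows "measure \<mu> {X \<in> stiefel n p. \<forall>j<p. c < X j j} * exp (c * (\<Sum>j<p. d j)) \<le> hyp0F1 p \<mu> d"
proof -
  let ?S = "stiefel n p"
  define U where "U = {X \<in> ?S. \<forall>j<p. c < X j j}"
  note hb = haar_basic[OF haar]
  interpret P: prob_space \<mu> by (rule hb(3))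
  have U_sets: "U \<in> sets \<mu>"
  proof -
    have "U = ?S \<inter> {X::rmat. \<forall>j<p. c < X j j}" unfolding U_def by auto
    moreover have "open {X::rmat. \<forall>j<p. c < X j j}"
    proof -
      have "{X::rmat. \<forall>j<p. c < X j j} = (\<Inter>j\<in>{..<p}. {X. c < X j j})" by auto
      also have "open \<dots>"
        by (intro open_INT ballI finite_lessThan open_Collect_less continuous_on_const cont_coord)
      finally show ?thesis .
    qed
    ultimately show ?thesis using hb(2) borel_open by blast
  qed
  define f where "f X = exp (\<Sum>j<p. d j * X j j)" for X :: rmat
  define K where "K = exp (c * (\<Sum>j<p. d j))"
  have fm: "f \<in> borel_measurable \<mu>"
    unfolding f_def
    by (intro hb(4) continuous_on_exp continuous_on_sum continuous_on_mult_left cont_coord)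
  have fb: "norm (f X) \<le> exp (\<Sum>j<p. \<bar>d j\<bar>)" if "X \<in> space \<mu>" for X
  proof -
    have X: "X \<in> ?S" using that hb(1) by simp
    have "(\<Sum>j<p. d j * X j j) \<le> (\<Sum>j<p. \<bar>d j\<bar>)"
    proof (rule sum_mono)
      fix j
      have "d j * X j j \<le> \<bar>d j * X j j\<bar>" by simp
      also have "\<dots> \<le> \<bar>d j\<bar>" using stiefel_entry_bound[OF X, of j j]
        by (simp add: abs_mult mult_left_le)
      finally show "d j * X j j \<le> \<bar>d j\<bar>" .
    qed
    then show ?thesis unfolding f_def by simp
  qed
  have fi: "integrable \<mu> f"
    by (rule P.integrable_const_bound[where B="exp (\<Sum>j<p. \<bar>d j\<bar>)"]) (use fb fm in auto)
  have gi: "integrable \<mu> (\<lambda>X. K * indicator U X)"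
    using U_sets by (intro integrable_mult_right integrable_real_indicator) (auto simp: P.emeasure_eq_measure)
  have "(\<integral>X. K * indicator U X \<partial>\<mu>) \<le> (\<integral>X. f X \<partial>\<mu>)"
  proof (rule integral_mono[OF gi fi])
    fix X assume "X \<in> space \<mu>"
    show "K * indicator U X \<le> f X"
    proof (cases "X \<in> U")
      case True
      then have "\<forall>j<p. c < X j j" unfolding U_def by auto
      then have "(\<Sum>j<p. d j * c) \<le> (\<Sum>j<p. d j * X j j)"
        using dpos by (intro sum_mono) (simp add: less_imp_le)
      moreover have "c * (\<Sum>j<p. d j) = (\<Sum>j<p. d j * c)"
        by (subst mult.commute) (rule sum_distrib_right)
      ultimately have "K \<le> f X" unfolding K_def f_def by simp
      then show ?thesis using True by simp
    next
      case False
      then show ?thesis unfolding f_def by simp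
    qed
  qed
  moreover have "(\<integral>X. K * indicator U X \<partial>\<mu>) = K * measure \<mu> U"
  proof -
    have "U \<inter> space \<mu> = U" using sets.sets_into_space[OF U_sets] by auto
    then show ?thesis by simp
  qed
  ultimately have "measure \<mu> U * K \<le> (\<integral>X. f X \<partial>\<mu>)" by (simp only: mult.commute)
  then show ?thesis unfolding hyp0F1_def f_def K_def U_def .
qed

theorem lemma6:
  fixes n p :: nat and \<mu> :: "rmat measure" and eps0 :: real
  assumes "1 \<le> p" and "p \<le> n"
    and "is_stiefel_haar n p \<mu>"
  shows "\<exists>K > 0. \<forall>\<Psi> d M V.
           spec_norm n p \<Psi> < 1 \<longrightarrow>
           eps0 = (1 - spec_norm n p \<Psi>) / 2 \<longrightarrow>
           (\<forall>j<p. 0 < d j) \<longrightarrow>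
           M \<in> stiefel n p \<longrightarrow>
           V \<in> stiefel p p \<longrightarrow>
           etr p (mmult n (mmult p (mmult p V (diagm d)) (mtrans M)) \<Psi>) / hyp0F1 p \<mu> d
             < etr p (\<lambda>i j. - eps0 * diagm d i j) / K"
proof (cases "eps0 > 0")
  case False
  show ?thesis
  proof (intro exI[of _ 1] conjI allI impI)
    show "(0::real) < 1" by simp
    fix \<Psi> :: rmat and d :: "nat \<Rightarrow> real" and M V :: rmat
    assume "spec_norm n p \<Psi> < 1" "eps0 = (1 - spec_norm n p \<Psi>) / 2"
    then have "eps0 > 0" by simp
    with False show "etr p (mmult n (mmult p (mmult p V (diagm d)) (mtrans M)) \<Psi>) / hyp0F1 p \<mu> d
             < etr p (\<lambda>i j. - eps0 * diagm d i j) / 1" by simp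
  qed
next
  case True
  define c where "c = 1 - eps0"
  define m where "m = measure \<mu> {X \<in> stiefel n p. \<forall>j<p. c < X j j}"
  have c1: "c < 1" unfolding c_def using True by simp
  have m: "m > 0" unfolding m_def by (rule U_pos[OF assms(3) assms(1) assms(2) c1])
  show ?thesis
  proof (intro exI[of _ "m / 2"] conjI allI impI)
    show "0 < m / 2" using m by simp
    fix \<Psi> :: rmat and d :: "nat \<Rightarrow> real" and M V :: rmat
    assume s1: "spec_norm n p \<Psi> < 1" and eq: "eps0 = (1 - spec_norm n p \<Psi>) / 2"
      and dpos: "\<forall>j<p. 0 < d j" and M: "M \<in> stiefel n p" and V: "V \<in> stiefel p p"
    define s where "s = spec_norm n p \<Psi>"
    define D where "D = (\<Sum>j<p. d j)"
    have sc0: "s = - eps0 + c" unfolding s_def c_def using eq by simp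
    have sc: "s * D = - eps0 * D + c * D" unfolding sc0 by (simp add: algebra_simps)
    have num: "etr p (mmult n (mmult p (mmult p V (diagm d)) (mtrans M)) \<Psi>) \<le> exp (s * D)"
    proof -
      have "(\<Sum>l<p. d l * (\<Sum>m<n. M m l * (\<Sum>i<p. \<Psi> m i * V i l))) \<le> (\<Sum>l<p. d l * s)"
      proof (rule sum_mono)
        fix l assume l: "l \<in> {..<p}"
        have "(\<Sum>m<n. M m l * (\<Sum>i<p. \<Psi> m i * V i l)) \<le> s"
          using trace_term_bound[OF M V, of l \<Psi>] l unfolding s_def by auto
        then show "d l * (\<Sum>m<n. M m l * (\<Sum>i<p. \<Psi> m i * V i l)) \<le> d l * s"
          using dpos l by (intro mult_left_mono) auto
      qed
      also have "\<dots> = s * D" unfolding D_def sum_distrib_right[symmetric] by (rule mult.commute)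
      finally show ?thesis unfolding etr_def trace_expand by simp
    qed
    have den: "m * exp (c * D) \<le> hyp0F1 p \<mu> d"
      unfolding m_def D_def by (rule den_lower[OF assms(3) dpos])
    have rhs: "etr p (\<lambda>i j. - eps0 * diagm d i j) = exp (- eps0 * D)"
      unfolding etr_def mtrace_def diagm_def D_def by (simp add: sum_distrib_left)
    have dp: "0 < m * exp (c * D)" using m by simp
    have "etr p (mmult n (mmult p (mmult p V (diagm d)) (mtrans M)) \<Psi>) / hyp0F1 p \<mu> d
        \<le> exp (s * D) / hyp0F1 p \<mu> d"
      by (rule divide_right_mono[OF num]) (use dp den in linarith)
    also have "\<dots> \<le> exp (s * D) / (m * exp (c * D))"
      by (rule divide_left_mono[OF den]) (use dp den in \<open>auto intro: mult_pos_pos\<close>)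
    also have "\<dots> = exp (- eps0 * D) / m"
      unfolding sc exp_add using m by simp
    also have "\<dots> < exp (- eps0 * D) / (m / 2)"
      using m by (simp add: field_simps)
    finally show "etr p (mmult n (mmult p (mmult p V (diagm d)) (mtrans M)) \<Psi>) / hyp0F1 p \<mu> d
             < etr p (\<lambda>i j. - eps0 * diagm d i j) / (m / 2)" unfolding rhs .
  qed
qed

end
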